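(* Let $\phi:\mathbb{N}_0\to\mathbb{N}_0$ satisfy $\phi(0)=0$ and $\phi(x)\neq x$ for all $x\in\mathbb{N}$, let $k,n\ge1$, and assume the local function $\phi_n$ has no cycle. Let $J_{n,k}(\phi)=\{x\in D_n:\phi_n^k(x)\in D_n\}$. Then $|J_{n,k}(\phi)|\le\max(n-k,0)$. In particular, $|J_{n,1}(\phi)|=n-|\widetilde{D}_n|$.
   Context: $\mathbb{N}=\{1,2,\dots\}$, $\mathbb{N}_0=\mathbb{N}\cup\{0\}$, $D_n=\{1,\dots,n\}$, $D_{n,0}=D_n\cup\{0\}$. The local function $\phi_n:D_{n,0}\to D_{n,0}$ is $\phi_n(x)=\phi(x)$ if $x\in D_n$ and $\phi(x)\in D_n$, and $\phi_n(x)=0$ otherwise. "$\phi_n$ has no cycle" means there are no $m\ge2$ and $x\in D_n$ with $\phi_n^m(x)=x$. The height of $x\in D_n$ is $h(x)=\min\{k\in\mathbb{N}:\phi_n^k(x)=0\}$, and the orbit of $x$ is $\Omega(x)=\{\phi_n^j(x):0\le j<h(x)\}$. $\widetilde{D}_n$ denotes the set of equivalence classes of $D_n$ under the equivalence relation $x\sim y\iff\Omega(x)\cap\Omega(y)\neq\emptyset$. *)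

theory Defs
  imports Main
begin

text \<open>D_n = {1..n}; the local function phi_n on D_{n,0} = {0..n}.\<close>

definition local_fun :: "(nat \<Rightarrow> nat) \<Rightarrow> nat \<Rightarrow> nat \<Rightarrow> nat" where
  "local_fun phi n x = (if x \<in> {1..n} \<and> phi x \<in> {1..n} then phi x else 0)"

definition no_cycle :: "(nat \<Rightarrow> nat) \<Rightarrow> nat \<Rightarrow> bool" where
  "no_cycle phi n \<longleftrightarrow>
     \<not> (\<exists>m\<ge>2. \<exists>x\<in>{1..n}. (local_fun phi n ^^ m) x = x)"

definition height :: "(nat \<Rightarrow> nat) \<Rightarrow> nat \<Rightarrow> nat \<Rightarrow> nat" where
  "height phi n x = (LEAST k. k \<ge> 1 \<and> (local_fun phi n ^^ k) x = 0)"

definition orbit :: "(nat \<Rightarrow> nat) \<Rightarrow> nat \<Rightarrow> nat \<Rightarrow> nat set" where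
  "orbit phi n x = {(local_fun phi n ^^ j) x | j. j < height phi n x}"

definition orbit_rel :: "(nat \<Rightarrow> nat) \<Rightarrow> nat \<Rightarrow> (nat \<times> nat) set" where
  "orbit_rel phi n = {(x, y). x \<in> {1..n} \<and> y \<in> {1..n} \<and> orbit phi n x \<inter> orbit phi n y \<noteq> {}}"

definition orbit_classes :: "(nat \<Rightarrow> nat) \<Rightarrow> nat \<Rightarrow> nat set set" where
  "orbit_classes phi n = {1..n} // orbit_rel phi n"

definition J_set :: "(nat \<Rightarrow> nat) \<Rightarrow> nat \<Rightarrow> nat \<Rightarrow> nat set" where
  "J_set phi n k = {x \<in> {1..n}. (local_fun phi n ^^ k) x \<in> {1..n}}"

end

theory Submission
  imports Defs
begin

lemma quot_card:
  assumes "finite A"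
  shows "card (A // {(x,y). x\<in>A \<and> y\<in>A \<and> g x = g y}) = card (g ` A)"
proof -
  have eq: "A // {(x,y). x\<in>A \<and> y\<in>A \<and> g x = g y} = (\<lambda>v. {x\<in>A. g x = v}) ` (g ` A)"
  proof -
    have "\<And>a. a \<in> A \<Longrightarrow> {(x, y). x \<in> A \<and> y \<in> A \<and> g x = g y} `` {a} = {x\<in>A. g x = g a}"
      by auto
    then show ?thesis unfolding quotient_def by (auto simp: image_iff)
  qed
  have "inj_on (\<lambda>v. {x\<in>A. g x = v}) (g ` A)"
  proof (rule inj_onI)
    fix v w assume "v \<in> g ` A" "w \<in> g ` A" "{x\<in>A. g x = v} = {x\<in>A. g x = w}"
    then show "v = w" by blast
  qed
  then show ?thesis unfolding eq by (rule card_image)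
qed

lemma lf0[simp]: "local_fun phi n 0 = 0"
  unfolding local_fun_def by auto

lemma lf_le: "local_fun phi n x \<le> n"
  unfolding local_fun_def by auto

lemma pow0[simp]: "(local_fun phi n ^^ j) 0 = 0"
  by (induction j) auto

lemma pow_le: fixes x n :: nat and phi :: "nat \<Rightarrow> nat" and j :: nat shows "x \<le> n \<Longrightarrow> (local_fun phi n ^^ j) x \<le> n"
  by (cases j) (auto simp: lf_le)

lemma pow_split: fixes i j :: nat and phi :: "nat \<Rightarrow> nat" and n x :: nat shows "i \<le> j \<Longrightarrow> (local_fun phi n ^^ j) x = (local_fun phi n ^^ (j - i)) ((local_fun phi n ^^ i) x)"
  by (metis funpow_add le_add_diff_inverse2 comp_apply)

lemma reach:
  assumes nc: "no_cycle phi n" and x: "x \<in> {1..n}"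
  shows "(local_fun phi n ^^ n) x = 0"
proof (rule ccontr)
  let ?F = "local_fun phi n"
  assume H: "(?F ^^ n) x \<noteq> 0"
  have nz: "(?F ^^ j) x \<noteq> 0" if "j \<le> n" for j
    using H pow_split[OF that, where phi=phi and n=n and x=x] by (metis pow0)
  have img: "(\<lambda>j. (?F ^^ j) x) ` {0..n} \<subseteq> {1..n}"
  proof
    fix z assume "z \<in> (\<lambda>j. (?F ^^ j) x) ` {0..n}"
    then obtain j where "j \<le> n" "z = (?F ^^ j) x" by auto
    then show "z \<in> {1..n}" using nz[of j] pow_le[where x=x and n=n and phi=phi and j=j] x by auto
  qed
  have "\<not> inj_on (\<lambda>j. (?F ^^ j) x) {0..n}"
  proof
    assume inj: "inj_on (\<lambda>j. (?F ^^ j) x) {0..n}"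
    have "card ((\<lambda>j. (?F ^^ j) x) ` {0..n}) \<le> n" using card_mono[OF _ img] by simp
    then show False using card_image[OF inj] by simp
  qed
  then obtain i j where ij: "i \<le> n" "j \<le> n" "i \<noteq> j" "(?F ^^ i) x = (?F ^^ j) x"
    unfolding inj_on_def by auto
  then obtain a b where ab: "a < b" "b \<le> n" "(?F ^^ a) x = (?F ^^ b) x"
    by (metis linorder_neqE_nat)
  define y where "y = (?F ^^ a) x"
  have yD: "y \<in> {1..n}" using nz[of a] pow_le[where x=x and n=n and phi=phi and j=a] x ab unfolding y_def by auto
  have cyc: "(?F ^^ (b - a)) y = y"
    using pow_split[where i=a and j=b and phi=phi and n=n and x=x] ab unfolding y_def by auto
  have "(?F ^^ ((b - a) + (b - a))) y = y"
    by (simp add: funpow_add cyc)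
  moreover have "(b - a) + (b - a) \<ge> 2" using ab by auto
  ultimately show False using nc yD unfolding no_cycle_def by blast
qed

lemma J_mono: "J_set phi n (Suc j) \<subseteq> J_set phi n j"
proof
  fix x assume "x \<in> J_set phi n (Suc j)"
  then have "x \<in> {1..n}" "(local_fun phi n ^^ Suc j) x \<in> {1..n}" unfolding J_set_def by auto
  moreover have "(local_fun phi n ^^ j) x \<in> {1..n}"
  proof (rule ccontr)
    assume "(local_fun phi n ^^ j) x \<notin> {1..n}"
    then have "(local_fun phi n ^^ j) x = 0" using pow_le[where x=x and n=n and phi=phi and j=j] \<open>x \<in> {1..n}\<close> by auto
    then show False using \<open>(local_fun phi n ^^ Suc j) x \<in> {1..n}\<close> by simp
  qed
  ultimately show "x \<in> J_set phi n j" unfolding J_set_def by auto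
qed

lemma pow_comp: "(f ^^ m) ((f ^^ k) x) = (f ^^ (m + k)) x"
  by (simp add: funpow_add)

lemma ex_last:
  assumes nc: "no_cycle phi n" and x: "x \<in> {1..n}"
  shows "\<exists>i. (local_fun phi n ^^ i) x \<noteq> 0 \<and> (local_fun phi n ^^ Suc i) x = 0"
proof -
  let ?F = "local_fun phi n"
  define m where "m = (LEAST m. (?F ^^ m) x = 0)"
  have m0: "(?F ^^ m) x = 0" unfolding m_def using reach[OF nc x] by (rule LeastI)
  have "m \<noteq> 0" using m0 x by (cases m) auto
  then obtain i where mi: "m = Suc i" by (cases m) auto
  have "(?F ^^ i) x \<noteq> 0"
  proof
    assume "(?F ^^ i) x = 0"
    then have "m \<le> i" unfolding m_def by (rule Least_le)
    then show False using mi by simp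
  qed
  then show ?thesis using m0 mi by blast
qed

lemma inD: "x \<in> {1..n} \<Longrightarrow> (local_fun phi n ^^ j) x \<noteq> 0 \<Longrightarrow> (local_fun phi n ^^ j) x \<in> {1..n}"
  using pow_le[where x=x and n=n and phi=phi and j=j] by auto

lemma J_strict:
  assumes nc: "no_cycle phi n" and ne: "J_set phi n j \<noteq> {}"
  shows "J_set phi n (Suc j) \<subset> J_set phi n j"
proof -
  let ?F = "local_fun phi n"
  obtain x where xJ: "x \<in> J_set phi n j" using ne by auto
  then have x: "x \<in> {1..n}" and xj: "(?F ^^ j) x \<in> {1..n}" unfolding J_set_def by auto
  obtain i where i: "(?F ^^ i) x \<noteq> 0" "(?F ^^ Suc i) x = 0" using ex_last[OF nc x] by blast
  have "j \<le> i"
  proof (rule ccontr)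
    assume "\<not> j \<le> i"
    then have "Suc i \<le> j" by simp
    then have "(?F ^^ j) x = 0" using pow_split[where i="Suc i" and j=j and phi=phi and n=n and x=x] i by simp
    then show False using xj by simp
  qed
  define y where "y = (?F ^^ (i - j)) x"
  have yy: "(?F ^^ j) y = (?F ^^ i) x" unfolding y_def
    using \<open>j \<le> i\<close> by (metis funpow_add comp_apply le_add_diff_inverse)
  have yy2: "(?F ^^ Suc j) y = 0" unfolding y_def
    using \<open>j \<le> i\<close> i by (metis funpow_add comp_apply le_add_diff_inverse add_Suc)
  have "y \<noteq> 0" using yy i by (metis pow0)
  then have yD: "y \<in> {1..n}" unfolding y_def using inD[OF x] by blast
  have "y \<in> J_set phi n j" unfolding J_set_def using yD yy inD[OF x i(1)] by simp
  moreover have "y \<notin> J_set phi n (Suc j)" unfolding J_set_def using yy2 by simp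
  ultimately show ?thesis using J_mono by blast
qed

lemma part1:
  assumes nc: "no_cycle phi n"
  shows "card (J_set phi n k) \<le> n - k"
proof (induction k)
  case 0
  have "J_set phi n 0 = {1..n}" unfolding J_set_def by auto
  then show ?case by simp
next
  case (Suc k)
  show ?case
  proof (cases "J_set phi n k = {}")
    case True
    then have "J_set phi n (Suc k) = {}" using J_mono by blast
    then show ?thesis by simp
  next
    case False
    have fin: "finite (J_set phi n k)" unfolding J_set_def by auto
    have "card (J_set phi n (Suc k)) < card (J_set phi n k)"
      using psubset_card_mono[OF fin J_strict[OF nc False]] .
    then show ?thesis using Suc.IH by simp
  qed
qed

lemma height_eq:
  assumes x: "x \<in> {1..n}" and i: "(local_fun phi n ^^ i) x \<noteq> 0" "(local_fun phi n ^^ Suc i) x = 0"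
  shows "height phi n x = Suc i"
  unfolding height_def
proof (rule Least_equality)
  show "1 \<le> Suc i \<and> (local_fun phi n ^^ Suc i) x = 0" using i by simp
  fix k assume k: "1 \<le> k \<and> (local_fun phi n ^^ k) x = 0"
  show "Suc i \<le> k"
  proof (rule ccontr)
    assume "\<not> Suc i \<le> k"
    then have "k \<le> i" by simp
    then have "(local_fun phi n ^^ i) x = 0"
      using pow_split[where i=k and j=i and phi=phi and n=n and x=x] k by (metis pow0)
    then show False using i by simp
  qed
qed

definition root :: "(nat \<Rightarrow> nat) \<Rightarrow> nat \<Rightarrow> nat \<Rightarrow> nat" where
  "root phi n x = (local_fun phi n ^^ (height phi n x - 1)) x"

lemma orbit_root:
  assumes nc: "no_cycle phi n" and x: "x \<in> {1..n}" and z: "z \<in> orbit phi n x"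
  shows "z \<in> {1..n} \<and> root phi n z = root phi n x"
proof -
  let ?F = "local_fun phi n"
  obtain i where i: "(?F ^^ i) x \<noteq> 0" "(?F ^^ Suc i) x = 0" using ex_last[OF nc x] by blast
  have h: "height phi n x = Suc i" using height_eq[OF x i] .
  obtain j where j: "z = (?F ^^ j) x" "j < Suc i" using z h unfolding orbit_def by auto
  have ji: "j \<le> i" using j by simp
  have zi: "(?F ^^ (i - j)) z = (?F ^^ i) x" using ji by (simp add: j(1) pow_comp)
  have zi2: "(?F ^^ Suc (i - j)) z = 0" using ji i by (simp add: j(1) pow_comp Suc_diff_le)
  have "z \<noteq> 0" using zi i by (metis pow0)
  then have zD: "z \<in> {1..n}" using inD[OF x] j by blast
  have "height phi n z = Suc (i - j)" using height_eq[OF zD _ zi2] zi i by simp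
  then show ?thesis using zD zi h unfolding root_def by simp
qed

lemma root_props:
  assumes nc: "no_cycle phi n" and x: "x \<in> {1..n}"
  shows "root phi n x \<in> orbit phi n x \<and> root phi n x \<in> {1..n} \<and> local_fun phi n (root phi n x) = 0"
proof -
  let ?F = "local_fun phi n"
  obtain i where i: "(?F ^^ i) x \<noteq> 0" "(?F ^^ Suc i) x = 0" using ex_last[OF nc x] by blast
  have h: "height phi n x = Suc i" using height_eq[OF x i] .
  have "root phi n x \<in> orbit phi n x" unfolding orbit_def root_def h by auto
  then show ?thesis using i h inD[OF x i(1)] unfolding root_def by simp
qed

lemma rel_eq:
  assumes nc: "no_cycle phi n"
  shows "orbit_rel phi n = {(x,y). x\<in>{1..n} \<and> y\<in>{1..n} \<and> root phi n x = root phi n y}"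
proof -
  have "orbit phi n x \<inter> orbit phi n y \<noteq> {} \<longleftrightarrow> root phi n x = root phi n y"
    if "x \<in> {1..n}" "y \<in> {1..n}" for x y
  proof
    assume "orbit phi n x \<inter> orbit phi n y \<noteq> {}"
    then obtain z where z: "z \<in> orbit phi n x" "z \<in> orbit phi n y" by auto
    have "root phi n z = root phi n x" using orbit_root[OF nc that(1) z(1)] by simp
    moreover have "root phi n z = root phi n y" using orbit_root[OF nc that(2) z(2)] by simp
    ultimately show "root phi n x = root phi n y" by simp
  next
    assume r: "root phi n x = root phi n y"
    show "orbit phi n x \<inter> orbit phi n y \<noteq> {}"
      using root_props[OF nc that(1)] root_props[OF nc that(2)] r by auto
  qed
  then show ?thesis unfolding orbit_rel_def by blast
qed

lemma root_img:
  assumes nc: "no_cycle phi n"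
  shows "root phi n ` {1..n} = {1..n} - J_set phi n 1"
proof
  show "root phi n ` {1..n} \<subseteq> {1..n} - J_set phi n 1"
  proof
    fix r assume "r \<in> root phi n ` {1..n}"
    then obtain x where x: "x \<in> {1..n}" "r = root phi n x" by blast
    have "r \<in> {1..n}" "local_fun phi n r = 0" using root_props[OF nc x(1)] x(2) by simp_all
    then show "r \<in> {1..n} - J_set phi n 1" unfolding J_set_def by simp
  qed
  show "{1..n} - J_set phi n 1 \<subseteq> root phi n ` {1..n}"
  proof
    fix r assume "r \<in> {1..n} - J_set phi n 1"
    then have r: "r \<in> {1..n}" "local_fun phi n r = 0" unfolding J_set_def
      using lf_le[of phi n r] by auto
    have "height phi n r = 1" using height_eq[OF r(1), where i=0] r by simp
    then have "root phi n r = r" unfolding root_def by simp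
    then show "r \<in> root phi n ` {1..n}" using r by force
  qed
qed

theorem proposition2p4:
  fixes phi :: "nat \<Rightarrow> nat" and n k :: nat
  assumes "phi 0 = 0"
    and "\<And>x. x \<ge> 1 \<Longrightarrow> phi x \<noteq> x"
    and "k \<ge> 1" and "n \<ge> 1"
    and "no_cycle phi n"
  shows "card (J_set phi n k) \<le> n - k \<and>
         card (J_set phi n 1) = n - card (orbit_classes phi n)"
proof
  show "card (J_set phi n k) \<le> n - k" using part1[OF assms(5)] .
  have "card (orbit_classes phi n) = card ({1..n} - J_set phi n 1)"
    unfolding orbit_classes_def rel_eq[OF assms(5)] root_img[OF assms(5), symmetric]
    by (rule quot_card) simp
  moreover have "J_set phi n 1 \<subseteq> {1..n}" unfolding J_set_def by auto
  moreover have "card (J_set phi n 1) \<le> n" using card_mono[OF _ \<open>J_set phi n 1 \<subseteq> {1..n}\<close>] by simp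
  moreover have "card ({1..n} - J_set phi n 1) = n - card (J_set phi n 1)"
    using card_Diff_subset[OF finite_subset[OF \<open>J_set phi n 1 \<subseteq> {1..n}\<close>] \<open>J_set phi n 1 \<subseteq> {1..n}\<close>] by simp
  ultimately show "card (J_set phi n 1) = n - card (orbit_classes phi n)"
    by simp
qed

end
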